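(* Let $\alpha_1,\alpha_2,\beta_2,\beta_3,\beta_4,\delta_1,\delta_2,\delta_4>0$ and consider the autonomous system $$u_1'=u_1(1-u_1-\alpha_1u_2-\delta_1u_3),\ u_2'=\beta_2u_2(1-u_2-\alpha_2u_1-\delta_2u_4),\ u_3'=\beta_3(u_2-u_3),\ u_4'=\beta_4(1-u_4-\delta_4u_4u_2).$$ It has the following steady states, with the stated linear stability properties: SS1: $(0,0,0,1)$ is unstable for all parameter values. SS2: $(1,0,0,1)$ is stable iff $\alpha_2+\delta_2>1$. SS3: $(0,\hat u_{2\pm},\hat u_{2\pm},[1+\delta_4\hat u_{2\pm}]^{-1})$ with $\hat u_{2\pm}=[\delta_4-1\pm\sqrt{(1+\delta_4)^2-4\delta_2\delta_4}]/(2\delta_4)$. The one with $\hat u_{2-}$ is unstable for all parameter values; the one with $\hat u_{2+}$ is stable iff $\delta_2<\frac{(\alpha_1+\delta_1+\delta_4)(\alpha_1+\delta_1-1)}{(\alpha_1+\delta_1)^2}$, or $\frac{(\alpha_1+\delta_1+\delta_4)(\alpha_1+\delta_1-1)}{(\alpha_1+\delta_1)^2}\le\delta_2<\frac{(1+\delta_4)^2}{4\delta_4}$ and $\frac1{\delta_4}<\frac{\alpha_1+\delta_1-2}{\alpha_1+\delta_1}$. SS4: $(1-(\alpha_1+\delta_1)\tilde u_{2\pm},\tilde u_{2\pm},\tilde u_{2\pm},[1+\delta_4\tilde u_{2\pm}]^{-1})$ where, writing $A=1-\alpha_2(\alpha_1+\delta_1)$, $$\tilde u_{2\pm}=\frac{-A-\delta_4(\alpha_2-1)\pm\sqrt{[A-\delta_4(\alpha_2-1)]^2-4\delta_2\delta_4A}}{2\delta_4A}.$$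 The one with $\tilde u_{2-}$ is not stable for any parameter values for which all its components are positive. The one with $\tilde u_{2+}$ (write $\tilde u_2=\tilde u_{2+}$) is stable iff $0<(\alpha_1+\delta_1)\tilde u_{2+}<1$, $0<\delta_2<\frac{[A-\delta_4(\alpha_2-1)]^2}{4\delta_4A}$ and $c_1c_2c_3>c_3^2c_0+c_1^2$, where $c_3=1-(\alpha_1+\delta_1)\tilde u_2+\beta_3+\beta_2\tilde u_2+\beta_4(1+\delta_4\tilde u_2)$, $c_2=\beta_3[\beta_2\tilde u_2+\beta_4(1+\delta_4\tilde u_2)]+[1-(\alpha_1+\delta_1)\tilde u_2][\beta_3+\beta_4(1+\delta_4\tilde u_2)+\beta_2\tilde u_2(1-\alpha_2\alpha_1)]+\frac{\beta_2\beta_4\tilde u_2}{1+\delta_4\tilde u_2}[(1+\delta_4\tilde u_2)^2-\delta_2\delta_4]$, $c_1=[1-(\alpha_1+\delta_1)\tilde u_2]\Big[\frac{\beta_2\beta_4\tilde u_2}{1+\delta_4\tilde u_2}[(1+\delta_4\tilde u_2)^2(1-\alpha_2\alpha_1)-\delta_2\delta_4]+\beta_3\beta_4(1+\delta_4\tilde u_2)\Big]+\beta_2\beta_3\tilde u_2[1-(\alpha_1+\delta_1)\tilde u_2]A+\frac{\beta_2\beta_3\beta_4\tilde u_2}{1+\delta_4\tilde u_2}[(1+\delta_4\tilde u_2)^2-\delta_2\delta_4]$, $c_0=\frac{\beta_2\beta_3\beta_4\tilde u_2}{1+\delta_4\tilde u_2}[1-(\alpha_1+\delta_1)\tilde u_2][(1+\delta_4\tilde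 u_2)^2A-\delta_2\delta_4]$.
   Context: "Stable" means linearly stable: all eigenvalues of the Jacobian of the right-hand side at the steady state have negative real part; "unstable" means the Jacobian has an eigenvalue with positive real part. *)

theory Defs
  imports "HOL-Analysis.Analysis"
begin

text \<open>Points of R^4; components are indexed by 1,2,3,4 (in the numeral type 4).\<close>
definition vec4 :: "real \<Rightarrow> real \<Rightarrow> real \<Rightarrow> real \<Rightarrow> real^4" where
  "vec4 a b c d = (\<chi> i. if i = 1 then a else if i = 2 then b else if i = 3 then c else d)"

definition lv_rhs :: "real \<Rightarrow> real \<Rightarrow> real \<Rightarrow> real \<Rightarrow> real \<Rightarrow> real \<Rightarrow> real \<Rightarrow> real
    \<Rightarrow> real^4 \<Rightarrow> real^4" where
  "lv_rhs alpha1 alpha2 beta2 beta3 beta4 delta1 delta2 delta4 u =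
     vec4 (u$1 * (1 - u$1 - alpha1 * u$2 - delta1 * u$3))
          (beta2 * u$2 * (1 - u$2 - alpha2 * u$1 - delta2 * u$4))
          (beta3 * (u$2 - u$3))
          (beta4 * (1 - u$4 - delta4 * u$4 * u$2))"

definition jacobian :: "(real^'n \<Rightarrow> real^'n) \<Rightarrow> real^'n \<Rightarrow> real^'n^'n" where
  "jacobian F x = matrix (frechet_derivative F (at x))"

definition is_eigenvalue :: "real^'n^'n \<Rightarrow> complex \<Rightarrow> bool" where
  "is_eigenvalue M lam \<longleftrightarrow>
     (\<exists>v :: complex^'n. v \<noteq> 0 \<and> (\<chi> i j. complex_of_real (M $ i $ j)) *v v = lam *s v)"

definition lin_stable :: "(real^'n \<Rightarrow> real^'n) \<Rightarrow> real^'n \<Rightarrow> bool" where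
  "lin_stable F x \<longleftrightarrow> (\<forall>lam. is_eigenvalue (jacobian F x) lam \<longrightarrow> Re lam < 0)"

definition lin_unstable :: "(real^'n \<Rightarrow> real^'n) \<Rightarrow> real^'n \<Rightarrow> bool" where
  "lin_unstable F x \<longleftrightarrow> (\<exists>lam. is_eigenvalue (jacobian F x) lam \<and> Re lam > 0)"

end

theory Submission
  imports Defs "HOL-Computational_Algebra.Fundamental_Theorem_Algebra"
begin

definition JL :: "real \<Rightarrow> real \<Rightarrow> real \<Rightarrow> real \<Rightarrow> real \<Rightarrow> real \<Rightarrow> real \<Rightarrow> real \<Rightarrow> real^4 \<Rightarrow> real^4^4" where
 "JL a1 a2 b2 b3 b4 d1 d2 d4 x = (\<chi> i j.
   if i = 1 then (if j = 1 then 1 - 2*x$1 - a1*x$2 - d1*x$3 else if j = 2 then -a1*x$1 else if j = 3 then -d1*x$1 else 0)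
   else if i = 2 then (if j = 1 then -b2*a2*x$2 else if j = 2 then b2*(1 - 2*x$2 - a2*x$1 - d2*x$4) else if j = 3 then 0 else -b2*d2*x$2)
   else if i = 3 then (if j = 1 then 0 else if j = 2 then b3 else if j = 3 then -b3 else 0)
   else (if j = 1 then 0 else if j = 2 then -b4*d4*x$4 else if j = 3 then 0 else -b4*(1 + d4*x$2)))"

lemma vec4_nth [simp]: "vec4 a b c d $ 1 = a" "vec4 a b c d $ 2 = b" "vec4 a b c d $ 3 = c" "vec4 a b c d $ 4 = d"
  by (simp_all add: vec4_def)

lemma lv_has_derivative:
  "(lv_rhs a1 a2 b2 b3 b4 d1 d2 d4 has_derivative (\<lambda>h. JL a1 a2 b2 b3 b4 d1 d2 d4 x *v h)) (at x)"
proof (subst has_derivative_componentwise_within, intro ballI)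
  fix i :: "real^4" assume "i \<in> Basis"
  then obtain k where i: "i = axis k 1" by (auto simp: Basis_vec_def)
  have c: "(\<lambda>y. lv_rhs a1 a2 b2 b3 b4 d1 d2 d4 y \<bullet> i) = (\<lambda>y. lv_rhs a1 a2 b2 b3 b4 d1 d2 d4 y $ k)"
          "(\<lambda>h. (JL a1 a2 b2 b3 b4 d1 d2 d4 x *v h) \<bullet> i) = (\<lambda>h. (JL a1 a2 b2 b3 b4 d1 d2 d4 x *v h) $ k)"
    by (simp_all add: i cart_eq_inner_axis)
  have bl: "\<And>j. ((\<lambda>y::real^4. y $ j) has_derivative (\<lambda>h. h $ j)) (at x)"
    by (rule bounded_linear_imp_has_derivative[OF bounded_linear_vec_nth])
  show "((\<lambda>y. lv_rhs a1 a2 b2 b3 b4 d1 d2 d4 y \<bullet> i) has_derivative (\<lambda>h. (JL a1 a2 b2 b3 b4 d1 d2 d4 x *v h) \<bullet> i)) (at x)"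
    unfolding c
  proof -
    have "k = 1 \<or> k = 2 \<or> k = 3 \<or> k = 4" by (rule exhaust_4)
    moreover have "((\<lambda>y. lv_rhs a1 a2 b2 b3 b4 d1 d2 d4 y $ 1) has_derivative (\<lambda>h. (JL a1 a2 b2 b3 b4 d1 d2 d4 x *v h) $ 1)) (at x)"
      unfolding lv_rhs_def vec4_nth
      apply (rule has_derivative_eq_rhs)
       apply (auto intro!: derivative_eq_intros bl)[1]
      apply (simp add: JL_def matrix_vector_mult_def sum_4 fun_eq_iff algebra_simps)
      done
    moreover have "((\<lambda>y. lv_rhs a1 a2 b2 b3 b4 d1 d2 d4 y $ 2) has_derivative (\<lambda>h. (JL a1 a2 b2 b3 b4 d1 d2 d4 x *v h) $ 2)) (at x)"
      unfolding lv_rhs_def vec4_nth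
      apply (rule has_derivative_eq_rhs)
       apply (auto intro!: derivative_eq_intros bl)[1]
      apply (simp add: JL_def matrix_vector_mult_def sum_4 fun_eq_iff algebra_simps)
      done
    moreover have "((\<lambda>y. lv_rhs a1 a2 b2 b3 b4 d1 d2 d4 y $ 3) has_derivative (\<lambda>h. (JL a1 a2 b2 b3 b4 d1 d2 d4 x *v h) $ 3)) (at x)"
      unfolding lv_rhs_def vec4_nth
      apply (rule has_derivative_eq_rhs)
       apply (auto intro!: derivative_eq_intros bl)[1]
      apply (simp add: JL_def matrix_vector_mult_def sum_4 fun_eq_iff algebra_simps)
      done
    moreover have "((\<lambda>y. lv_rhs a1 a2 b2 b3 b4 d1 d2 d4 y $ 4) has_derivative (\<lambda>h. (JL a1 a2 b2 b3 b4 d1 d2 d4 x *v h) $ 4)) (at x)"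
      unfolding lv_rhs_def vec4_nth
      apply (rule has_derivative_eq_rhs)
       apply (auto intro!: derivative_eq_intros bl)[1]
      apply (simp add: JL_def matrix_vector_mult_def sum_4 fun_eq_iff algebra_simps)
      done
    ultimately show "((\<lambda>y. lv_rhs a1 a2 b2 b3 b4 d1 d2 d4 y $ k) has_derivative (\<lambda>h. (JL a1 a2 b2 b3 b4 d1 d2 d4 x *v h) $ k)) (at x)"
      by blast
  qed
qed

lemma jacobian_lv: "jacobian (lv_rhs a1 a2 b2 b3 b4 d1 d2 d4) x = JL a1 a2 b2 b3 b4 d1 d2 d4 x"
  unfolding jacobian_def using frechet_derivative_at[OF lv_has_derivative]
  by (metis matrix_of_matrix_vector_mul)

lemma det_4:
  "det (A::'a::comm_ring_1^4^4) =
    A$1$1 * (A$2$2 * (A$3$3 * A$4$4 - A$3$4 * A$4$3) - A$2$3 * (A$3$2 * A$4$4 - A$3$4 * A$4$2) + A$2$4 * (A$3$2 * A$4$3 - A$3$3 * A$4$2))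
  - A$1$2 * (A$2$1 * (A$3$3 * A$4$4 - A$3$4 * A$4$3) - A$2$3 * (A$3$1 * A$4$4 - A$3$4 * A$4$1) + A$2$4 * (A$3$1 * A$4$3 - A$3$3 * A$4$1))
  + A$1$3 * (A$2$1 * (A$3$2 * A$4$4 - A$3$4 * A$4$2) - A$2$2 * (A$3$1 * A$4$4 - A$3$4 * A$4$1) + A$2$4 * (A$3$1 * A$4$2 - A$3$2 * A$4$1))
  - A$1$4 * (A$2$1 * (A$3$2 * A$4$3 - A$3$3 * A$4$2) - A$2$2 * (A$3$1 * A$4$3 - A$3$3 * A$4$1) + A$2$3 * (A$3$1 * A$4$2 - A$3$2 * A$4$1))"
proof -
  have f1: "finite {2::4, 3, 4}" "1 \<notin> {2::4, 3, 4}" by auto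
  have f2: "finite {3::4, 4}" "2 \<notin> {3::4, 4}" by auto
  have f3: "finite {4::4}" "3 \<notin> {4::4}" by auto
  show ?thesis
    unfolding det_def UNIV_4
    unfolding sum_over_permutations_insert[OF f1]
    unfolding sum_over_permutations_insert[OF f2]
    unfolding sum_over_permutations_insert[OF f3]
    unfolding permutes_sing
    by (simp add: sign_swap_id permutation_swap_id permutation_compose sign_compose sign_id swap_id_eq algebra_simps)
qed

lemma eig_iff:
  fixes M :: "real^'n^'n"
  shows "is_eigenvalue M lam \<longleftrightarrow> det (\<chi> i j. (if i = j then lam else 0) - complex_of_real (M$i$j)) = 0"
proof -
  define N where "N = (\<chi> i j. (if i = j then lam else 0) - complex_of_real (M$i$j))"
  have eq: "((\<chi> i j. complex_of_real (M $ i $ j)) *v v = lam *s v) \<longleftrightarrow> N *v v = 0" for v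
  proof -
    have "N *v v = lam *s v - (\<chi> i j. complex_of_real (M $ i $ j)) *v v"
      by (simp add: N_def vec_eq_iff matrix_vector_mult_def left_diff_distrib sum_subtractf
            if_distrib[where f="\<lambda>x. x * _"] cong: if_cong)
    then show ?thesis by (metis eq_iff_diff_eq_0)
  qed
  have inj: "inj ((*v) N) \<longleftrightarrow> (\<forall>v. N *v v = 0 \<longrightarrow> v = 0)"
  proof
    assume "inj ((*v) N)" then show "\<forall>v. N *v v = 0 \<longrightarrow> v = 0"
      by (metis injD matrix_vector_mult_0_right)
  next
    assume h: "\<forall>v. N *v v = 0 \<longrightarrow> v = 0"
    show "inj ((*v) N)"
    proof (rule injI)
      fix x y assume "N *v x = N *v y"
      then have "N *v (x - y) = 0" by (simp add: matrix_vector_mult_diff_distrib)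
      with h show "x = y" by auto
    qed
  qed
  have "det N \<noteq> 0 \<longleftrightarrow> inj ((*v) N)"
    using det_nz_iff_inj_gen[of "(*v) N"] by simp
  then show ?thesis
    unfolding is_eigenvalue_def eq N_def[symmetric] using inj by blast
qed

lemma cubic_root: "\<exists>z::complex. z^3 + a*z^2 + b*z + c = 0"
proof -
  have "\<exists>z. poly [:c, b, a, 1:] z = (0::complex)"
    by (rule fundamental_theorem_of_algebra_alt) auto
  then show ?thesis by (auto simp: algebra_simps power2_eq_square power3_eq_cube)
qed

lemma quartic_root: "\<exists>z::complex. z^4 + a*z^3 + b*z^2 + c*z + d = 0"
proof -
  have "\<exists>z. poly [:d, c, b, a, 1:] z = (0::complex)"
    by (rule fundamental_theorem_of_algebra_alt) auto
  then show ?thesis by (auto simp: algebra_simps power2_eq_square power3_eq_cube power4_eq_xxxx)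
qed

lemma real_of_Im0: "Im z = 0 \<Longrightarrow> z = complex_of_real (Re z)"
  by (simp add: complex_eq_iff)

lemma lin_real_zero:
  fixes g d :: real assumes "complex_of_real g * r + complex_of_real d = 0" "Im r \<noteq> 0"
  shows "g = 0 \<and> d = 0"
proof -
  from assms(1) have "Im (complex_of_real g * r + complex_of_real d) = 0" by simp
  then have "g * Im r = 0" by simp
  with assms(2) have "g = 0" by simp
  with assms(1) show ?thesis by simp
qed

lemma conj_quad: "r^2 + complex_of_real (-2 * Re r) * r + complex_of_real (Re r ^2 + Im r ^2) = 0"
  by (simp add: complex_eq_iff power2_eq_square algebra_simps)

lemma cubic_factor:
  fixes a2 a1 a0 :: real
  shows "\<exists>(p::real) (q::real) (s::real). a2 = p + s \<and> a1 = q + p * s \<and> a0 = q * s"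
proof -
  obtain t :: complex where t: "t^3 + a2*t^2 + a1*t + a0 = 0" using cubic_root[of "of_real a2" "of_real a1" "of_real a0"] by blast
  show ?thesis
  proof (cases "Im t = 0")
    case True
    define \<tau> where "\<tau> = Re t"
    have t': "t = complex_of_real \<tau>" using True by (simp add: \<tau>_def complex_eq_iff)
    define b1 where "b1 = a2 + \<tau>"
    define b0 where "b0 = a1 + \<tau> * b1"
    have r: "a0 + \<tau> * b0 = 0"
    proof -
      have "complex_of_real (\<tau>^3 + a2*\<tau>^2 + a1*\<tau> + a0) = t^3 + a2*t^2 + a1*t + a0" unfolding t' by simp
      then have "complex_of_real (\<tau>^3 + a2*\<tau>^2 + a1*\<tau> + a0) = 0" using t by simp
      then have "\<tau>^3 + a2*\<tau>^2 + a1*\<tau> + a0 = 0" by (simp only: of_real_eq_0_iff)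
      then show ?thesis by (simp add: b0_def b1_def algebra_simps power2_eq_square power3_eq_cube)
    qed
    have a0: "a0 = - \<tau> * b0" using r by linarith
    show ?thesis
      by (rule exI[of _ b1], rule exI[of _ b0], rule exI[of _ "-\<tau>"]) (simp add: a0 b0_def b1_def algebra_simps)
  next
    case False
    define p where "p = -2 * Re t"
    define q where "q = Re t ^2 + Im t ^2"
    define s where "s = a2 - p"
    define g where "g = a1 - p * s - q"
    define d where "d = a0 - q * s"
    have id: "z^3 + a2*z^2 + a1*z + a0 = (z^2 + p*z + q) * (z + s) + (g*z + d)" for z :: complex
      by (simp add: s_def g_def d_def algebra_simps power2_eq_square power3_eq_cube)
    have "t^2 + p*t + q = 0" unfolding p_def q_def by (rule conj_quad)
    with id[of t] t have "complex_of_real g * t + complex_of_real d = 0" by simp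
    then have "g = 0 \<and> d = 0" using False by (rule lin_real_zero)
    then show ?thesis
      by (intro exI[of _ p] exI[of _ q] exI[of _ s]) (simp add: s_def g_def d_def algebra_simps)
  qed
qed

lemma quartic_factor:
  fixes c3 c2 c1 c0 :: real
  shows "\<exists>(p1::real) (q1::real) (p2::real) (q2::real).
     c3 = p1 + p2 \<and> c2 = q1 + q2 + p1 * p2 \<and> c1 = p1 * q2 + p2 * q1 \<and> c0 = q1 * q2"
proof -
  obtain r :: complex where r: "r^4 + c3*r^3 + c2*r^2 + c1*r + c0 = 0" using quartic_root[of "of_real c3" "of_real c2" "of_real c1" "of_real c0"] by blast
  show ?thesis
  proof (cases "Im r = 0")
    case True
    define \<rho> where "\<rho> = Re r"
    have r': "r = complex_of_real \<rho>" using True by (simp add: \<rho>_def complex_eq_iff)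
    define a2 where "a2 = c3 + \<rho>"
    define a1 where "a1 = c2 + \<rho> * a2"
    define a0 where "a0 = c1 + \<rho> * a1"
    have rr: "c0 + \<rho> * a0 = 0"
    proof -
      have "complex_of_real (\<rho>^4 + c3*\<rho>^3 + c2*\<rho>^2 + c1*\<rho> + c0) = r^4 + c3*r^3 + c2*r^2 + c1*r + c0" unfolding r' by simp
      then have "complex_of_real (\<rho>^4 + c3*\<rho>^3 + c2*\<rho>^2 + c1*\<rho> + c0) = 0" using r by simp
      then have "\<rho>^4 + c3*\<rho>^3 + c2*\<rho>^2 + c1*\<rho> + c0 = 0" by (simp only: of_real_eq_0_iff)
      then show ?thesis by (simp add: a0_def a1_def a2_def algebra_simps power2_eq_square power3_eq_cube power4_eq_xxxx)
    qed
    obtain p q s :: real where pqs: "a2 = p + s" "a1 = q + p * s" "a0 = q * s"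
      using cubic_factor by blast
    have c0: "c0 = - \<rho> * a0" using rr by linarith
    have c3: "c3 = a2 - \<rho>" "c2 = a1 - \<rho> * a2" "c1 = a0 - \<rho> * a1" by (simp_all add: a0_def a1_def a2_def)
    show ?thesis
      by (intro exI[of _ p] exI[of _ q] exI[of _ "s - \<rho>"] exI[of _ "- \<rho> * s"])
         (simp add: c0 c3 pqs algebra_simps)
  next
    case False
    define p where "p = -2 * Re r"
    define q where "q = Re r ^2 + Im r ^2"
    define al where "al = c3 - p"
    define be where "be = c2 - q - p*al"
    define g where "g = c1 - p*be - q*al"
    define d where "d = c0 - q*be"
    have id: "z^4 + c3*z^3 + c2*z^2 + c1*z + c0 = (z^2 + p*z + q) * (z^2 + al*z + be) + (g*z + d)" for z :: complex
      by (simp add: al_def be_def g_def d_def algebra_simps power2_eq_square power3_eq_cube power4_eq_xxxx)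
    have "r^2 + p*r + q = 0" unfolding p_def q_def by (rule conj_quad)
    with id[of r] r have "complex_of_real g * r + complex_of_real d = 0" by simp
    then have "g = 0 \<and> d = 0" using False by (rule lin_real_zero)
    then show ?thesis
      by (intro exI[of _ p] exI[of _ q] exI[of _ al] exI[of _ be]) (simp add: al_def be_def g_def d_def algebra_simps)
  qed
qed

lemma quad_roots:
  fixes p q :: real
  shows "(\<forall>z::complex. z^2 + p*z + q = 0 \<longrightarrow> Re z < 0) \<longleftrightarrow> p > 0 \<and> q > 0"
proof (cases "p^2 - 4*q \<ge> 0")
  case True
  define s where "s = sqrt (p^2 - 4*q)"
  have s2: "s^2 = p^2 - 4*q" unfolding s_def using True by (rule real_sqrt_pow2)
  have s0: "s \<ge> 0" unfolding s_def using True by simp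
  define r1 where "r1 = (-p + s)/2"
  define r2 where "r2 = (-p - s)/2"
  have fac: "z^2 + p*z + q = (z - r1) * (z - r2)" for z :: complex
  proof -
    have hq: "q = r1 * r2" using s2 by (simp add: r1_def r2_def field_simps power2_eq_square) 
    have hp: "p = - (r1 + r2)" by (simp add: r1_def r2_def field_simps)
    show ?thesis unfolding hp hq by (simp add: algebra_simps power2_eq_square)
  qed
  have "(\<forall>z::complex. z^2 + p*z + q = 0 \<longrightarrow> Re z < 0) \<longleftrightarrow> r1 < 0 \<and> r2 < 0"
    unfolding fac by auto
  also have "\<dots> \<longleftrightarrow> p > 0 \<and> q > 0"
  proof -
    have "r1 * r2 = q" using s2 by (simp add: r1_def r2_def field_simps power2_eq_square)
    moreover have "r1 + r2 = -p" by (simp add: r1_def r2_def field_simps)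
    moreover have "r2 \<le> r1" using s0 by (simp add: r1_def r2_def)
    ultimately show ?thesis
      by (smt (verit) mult_le_0_iff mult_pos_pos)
  qed
  finally show ?thesis .
next
  case False
  define s where "s = sqrt (4*q - p^2)"
  have s2: "s^2 = 4*q - p^2" unfolding s_def using False by (intro real_sqrt_pow2) linarith
  define r1 where "r1 = Complex (-p/2) (s/2)"
  define r2 where "r2 = Complex (-p/2) (-s/2)"
  have fac: "z^2 + p*z + q = (z - r1) * (z - r2)" for z :: complex
  proof -
    have hq: "complex_of_real q = r1 * r2" using s2
      by (simp add: r1_def r2_def complex_eq_iff field_simps power2_eq_square)
    have hp: "complex_of_real p = - (r1 + r2)" by (simp add: r1_def r2_def complex_eq_iff)
    show ?thesis unfolding hp hq by (simp add: algebra_simps power2_eq_square)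
  qed
  have "(\<forall>z::complex. z^2 + p*z + q = 0 \<longrightarrow> Re z < 0) \<longleftrightarrow> -p/2 < 0"
    unfolding fac by (auto simp: r1_def r2_def)
  moreover have "q > 0" using False by (smt (verit) zero_le_power2)
  ultimately show ?thesis by auto
qed

lemma quad_pos_root:
  fixes p q :: real assumes "q < 0"
  shows "\<exists>x::real. x > 0 \<and> x^2 + p*x + q = 0"
proof -
  define s where "s = sqrt (p^2 - 4*q)"
  have s2: "s^2 = p^2 - 4*q" unfolding s_def using assms by (intro real_sqrt_pow2) (smt (verit) zero_le_power2)
  have s0: "s \<ge> 0" unfolding s_def using assms by (smt (verit) real_sqrt_ge_zero zero_le_power2)
  have "p^2 < s^2" using s2 assms by simp
  then have "\<bar>p\<bar> < s" using s0 by (metis abs_le_square_iff abs_of_nonneg not_less)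
  then have pos: "(-p + s)/2 > 0" by simp
  have "((-p + s)/2)^2 + p*((-p + s)/2) + q = 0" using s2 by (simp add: field_simps power2_eq_square)
  with pos show ?thesis by blast
qed

lemma hurwitz4:
  fixes c3 c2 c1 c0 :: real
  shows "(\<forall>z::complex. z^4 + c3*z^3 + c2*z^2 + c1*z + c0 = 0 \<longrightarrow> Re z < 0) \<longleftrightarrow>
         (c3 > 0 \<and> c1 > 0 \<and> c0 > 0 \<and> c1 * c2 * c3 > c1^2 + c3^2 * c0)"
proof -
  obtain p1 q1 p2 q2 :: real where c: "c3 = p1 + p2" "c2 = q1 + q2 + p1 * p2" "c1 = p1 * q2 + p2 * q1" "c0 = q1 * q2"
    using quartic_factor by blast
  have fac: "z^4 + c3*z^3 + c2*z^2 + c1*z + c0 = (z^2 + p1*z + q1) * (z^2 + p2*z + q2)" for z :: complex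
    by (simp add: c algebra_simps power2_eq_square power3_eq_cube power4_eq_xxxx)
  have "(\<forall>z::complex. z^4 + c3*z^3 + c2*z^2 + c1*z + c0 = 0 \<longrightarrow> Re z < 0) \<longleftrightarrow>
        (\<forall>z::complex. z^2 + p1*z + q1 = 0 \<longrightarrow> Re z < 0) \<and> (\<forall>z::complex. z^2 + p2*z + q2 = 0 \<longrightarrow> Re z < 0)"
    unfolding fac by auto
  also have "\<dots> \<longleftrightarrow> (p1 > 0 \<and> q1 > 0) \<and> (p2 > 0 \<and> q2 > 0)"
    by (simp only: quad_roots)
  also have "\<dots> \<longleftrightarrow> (c3 > 0 \<and> c1 > 0 \<and> c0 > 0 \<and> c1 * c2 * c3 > c1^2 + c3^2 * c0)"
  proof -
    have key: "c1 * c2 * c3 - (c1^2 + c3^2 * c0) = p1 * p2 * ((q1 - q2)^2 + c3 * c1)"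
      by (simp add: c algebra_simps power2_eq_square)
    show ?thesis
    proof
      assume h: "(p1 > 0 \<and> q1 > 0) \<and> (p2 > 0 \<and> q2 > 0)"
      then have "c3 > 0" "c1 > 0" "c0 > 0" by (simp_all add: c add_pos_pos)
      moreover have "p1 * p2 * ((q1 - q2)^2 + c3 * c1) > 0"
        using h \<open>c3 > 0\<close> \<open>c1 > 0\<close> by (simp add: add_nonneg_pos)
      ultimately show "c3 > 0 \<and> c1 > 0 \<and> c0 > 0 \<and> c1 * c2 * c3 > c1^2 + c3^2 * c0"
        using key by linarith
    next
      assume h: "c3 > 0 \<and> c1 > 0 \<and> c0 > 0 \<and> c1 * c2 * c3 > c1^2 + c3^2 * c0"
      then have "p1 * p2 * ((q1 - q2)^2 + c3 * c1) > 0" using key by linarith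
      moreover have "(q1 - q2)^2 + c3 * c1 > 0" using h by (simp add: add_nonneg_pos)
      ultimately have "p1 * p2 > 0" by (simp add: zero_less_mult_iff)
      with h c(1) have p: "p1 > 0" "p2 > 0" by (auto simp: zero_less_mult_iff)
      from h c(4) have "q1 * q2 > 0" by simp
      moreover from h c(3) p have "\<not> (q1 < 0 \<and> q2 < 0)"
        by (smt (verit) mult_pos_neg)
      ultimately have "q1 > 0" "q2 > 0" by (auto simp: zero_less_mult_iff)
      with p show "(p1 > 0 \<and> q1 > 0) \<and> (p2 > 0 \<and> q2 > 0)" by simp
    qed
  qed
  finally show ?thesis .
qed

definition SM :: "real \<Rightarrow> real \<Rightarrow> real \<Rightarrow> real \<Rightarrow> real \<Rightarrow> real \<Rightarrow> real \<Rightarrow> real \<Rightarrow> real \<Rightarrow> real \<Rightarrow> real^4^4" where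
 "SM a b c d e f g h k l = (\<chi> i j.
   if i = 1 then (if j = 1 then a else if j = 2 then b else if j = 3 then c else 0)
   else if i = 2 then (if j = 1 then d else if j = 2 then e else if j = 3 then 0 else f)
   else if i = 3 then (if j = 1 then 0 else if j = 2 then g else if j = 3 then h else 0)
   else (if j = 1 then 0 else if j = 2 then k else if j = 3 then 0 else l))"

lemma JL_SM: "JL a1 a2 b2 b3 b4 d1 d2 d4 x = SM (1 - 2*x$1 - a1*x$2 - d1*x$3) (-a1*x$1) (-d1*x$1)
   (-b2*a2*x$2) (b2*(1 - 2*x$2 - a2*x$1 - d2*x$4)) (-b2*d2*x$2) b3 (-b3) (-b4*d4*x$4) (-b4*(1 + d4*x$2))"
  unfolding JL_def SM_def by (simp add: vec_eq_iff)

lemma eig_SM: "is_eigenvalue (SM a b c d e f g h k l) lam \<longleftrightarrow>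
  (lam - a)*(lam - h)*((lam - e)*(lam - l) - f*k) - b*d*(lam - h)*(lam - l) - c*d*g*(lam - l) = 0"
  unfolding eig_iff det_4 by (simp add: SM_def algebra_simps)

lemma stab_iff: "lin_stable (lv_rhs a1 a2 b2 b3 b4 d1 d2 d4) x \<longleftrightarrow>
   (\<forall>lam. is_eigenvalue (JL a1 a2 b2 b3 b4 d1 d2 d4 x) lam \<longrightarrow> Re lam < 0)"
  by (simp add: lin_stable_def jacobian_lv)

lemma unstab_iff: "lin_unstable (lv_rhs a1 a2 b2 b3 b4 d1 d2 d4) x \<longleftrightarrow>
   (\<exists>lam. is_eigenvalue (JL a1 a2 b2 b3 b4 d1 d2 d4 x) lam \<and> Re lam > 0)"
  by (simp add: lin_unstable_def jacobian_lv)

lemma vec4_eq0: "vec4 a b c d = 0 \<longleftrightarrow> a = 0 \<and> b = 0 \<and> c = 0 \<and> d = 0"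
  by (auto simp: vec_eq_iff forall_4)

lemma SS1:
  "lv_rhs a1 a2 b2 b3 b4 d1 d2 d4 (vec4 0 0 0 1) = 0 \<and> lin_unstable (lv_rhs a1 a2 b2 b3 b4 d1 d2 d4) (vec4 0 0 0 1)"
proof
  show "lv_rhs a1 a2 b2 b3 b4 d1 d2 d4 (vec4 0 0 0 1) = 0" by (simp add: lv_rhs_def vec4_eq0)
  show "lin_unstable (lv_rhs a1 a2 b2 b3 b4 d1 d2 d4) (vec4 0 0 0 1)"
    unfolding unstab_iff JL_SM eig_SM by (rule exI[of _ 1]) simp
qed

lemma SS2:
  assumes "b2 > 0" "b3 > 0" "b4 > 0"
  shows "lv_rhs a1 a2 b2 b3 b4 d1 d2 d4 (vec4 1 0 0 1) = 0 \<and>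
    (lin_stable (lv_rhs a1 a2 b2 b3 b4 d1 d2 d4) (vec4 1 0 0 1) \<longleftrightarrow> a2 + d2 > 1)"
proof
  show "lv_rhs a1 a2 b2 b3 b4 d1 d2 d4 (vec4 1 0 0 1) = 0" by (simp add: lv_rhs_def vec4_eq0)
  define e where "e = b2 * (1 - a2 - d2)"
  have cp: "is_eigenvalue (JL a1 a2 b2 b3 b4 d1 d2 d4 (vec4 1 0 0 1)) lam \<longleftrightarrow>
     (lam + 1) * (lam + b3) * (lam - e) * (lam + b4) = 0" for lam
    unfolding JL_SM eig_SM by (simp add: e_def algebra_simps)
  show "lin_stable (lv_rhs a1 a2 b2 b3 b4 d1 d2 d4) (vec4 1 0 0 1) \<longleftrightarrow> a2 + d2 > 1"
  proof
    assume "lin_stable (lv_rhs a1 a2 b2 b3 b4 d1 d2 d4) (vec4 1 0 0 1)"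
    then have "Re (complex_of_real e) < 0" unfolding stab_iff cp by auto
    then have "e < 0" by simp
    with assms show "a2 + d2 > 1" by (simp add: e_def mult_less_0_iff)
  next
    assume "a2 + d2 > 1"
    with assms have "e < 0" by (simp add: e_def mult_pos_neg)
    then show "lin_stable (lv_rhs a1 a2 b2 b3 b4 d1 d2 d4) (vec4 1 0 0 1)"
      unfolding stab_iff cp using assms
      by (auto simp: add_eq_0_iff2 diff_eq_eq)
  qed
qed

lemma SS3_gen:
  fixes u :: real and lam :: complex
  assumes st: "(1 - u) * (1 + d4 * u) = d2" and d2: "d2 > 0"
  defines "q \<equiv> 1 + d4 * u"
  shows "lv_rhs a1 a2 b2 b3 b4 d1 d2 d4 (vec4 0 u u (1 / q)) = 0"
    "is_eigenvalue (JL a1 a2 b2 b3 b4 d1 d2 d4 (vec4 0 u u (1 / q))) lam \<longleftrightarrow>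
     (lam - (1 - (a1 + d1) * u)) * (lam + b3) * (lam^2 + (b2*u + b4*q) * lam + b2*b4*u*(q - d2*d4/q)) = 0"
proof -
  have q0: "q \<noteq> 0" using st d2 q_def by auto
  have st': "d2 = (1 - u) * q" using st q_def by simp
  have e1: "1 - u - d2 * (1/q) = 0" using q0 by (simp add: st')
  have e2: "1 - 1/q - d4 * (1/q) * u = 0" using q0 by (simp add: q_def field_simps)
  show "lv_rhs a1 a2 b2 b3 b4 d1 d2 d4 (vec4 0 u u (1 / q)) = 0"
  proof -
    have e1': "d2 / q = 1 - u" using q0 by (simp add: st')
    have e2': "1 - 1 / q = d4 * u / q" using q0 by (simp add: q_def field_simps)
    show ?thesis by (simp add: lv_rhs_def vec4_eq0 e1' e2')
  qed
  have e3: "b2 * (1 - 2 * u - d2 * (1/q)) = - b2 * u" using q0 by (simp add: st' field_simps)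
  have e4: "1 - a1 * u - d1 * u = 1 - (a1 + d1) * u" by (simp add: algebra_simps)
  show "is_eigenvalue (JL a1 a2 b2 b3 b4 d1 d2 d4 (vec4 0 u u (1 / q))) lam \<longleftrightarrow>
     (lam - (1 - (a1 + d1) * u)) * (lam + b3) * (lam^2 + (b2*u + b4*q) * lam + b2*b4*u*(q - d2*d4/q)) = 0"
  proof -
    have JLeq: "JL a1 a2 b2 b3 b4 d1 d2 d4 (vec4 0 u u (1 / q)) =
      SM (1 - (a1 + d1) * u) 0 0 (-b2*a2*u) (-b2*u) (-b2*d2*u) b3 (-b3) (-b4*d4/q) (-b4*q)"
      unfolding JL_SM
    proof -
      have e3': "b2 - (b2 * d2 / q + b2 * (u * 2)) = - (b2 * u)" using q0 by (simp add: st' field_simps)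
      show "SM (1 - 2 * vec4 0 u u (1 / q) $ 1 - a1 * vec4 0 u u (1 / q) $ 2 - d1 * vec4 0 u u (1 / q) $ 3)
     (- a1 * vec4 0 u u (1 / q) $ 1) (- d1 * vec4 0 u u (1 / q) $ 1) (- b2 * a2 * vec4 0 u u (1 / q) $ 2)
     (b2 * (1 - 2 * vec4 0 u u (1 / q) $ 2 - a2 * vec4 0 u u (1 / q) $ 1 - d2 * vec4 0 u u (1 / q) $ 4))
     (- b2 * d2 * vec4 0 u u (1 / q) $ 2) b3 (- b3) (- b4 * d4 * vec4 0 u u (1 / q) $ 4)
     (- b4 * (1 + d4 * vec4 0 u u (1 / q) $ 2)) =
    SM (1 - (a1 + d1) * u) 0 0 (- b2 * a2 * u) (- b2 * u) (- b2 * d2 * u) b3 (- b3) (- b4 * d4 / q) (- b4 * q)"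
        by (simp add: e3' q_def[symmetric] algebra_simps)
    qed
    have "of_real q \<noteq> (0::complex)" using q0 by simp
    then show ?thesis
      unfolding JLeq eig_SM by (simp add: field_simps power2_eq_square)
  qed
qed

lemma SS3_alg:
  fixes sq u d2 d4 :: real
  assumes d4: "d4 > 0" and s2: "sq^2 = (1 + d4)^2 - 4*d2*d4" and u: "u = (d4 - 1 + eps * sq) / (2*d4)"
    and eps: "eps^2 = 1"
  shows "(1 - u) * (1 + d4 * u) = d2" "1 + d4 * u = (1 + d4 + eps * sq) / 2"
    "(1 + d4 * u)^2 - d2 * d4 = sq * (sq + eps * (1 + d4)) / 2"
proof -
  have h1: "1 - u = (1 + d4 - eps * sq) / (2 * d4)" using d4 by (simp add: u field_simps)
  show h2: "1 + d4 * u = (1 + d4 + eps * sq) / 2" using d4 by (simp add: u field_simps)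
  have "(1 - u) * (1 + d4 * u) = ((1 + d4)^2 - eps^2 * sq^2) / (4 * d4)"
    unfolding h1 h2 using d4 by (simp add: field_simps power2_eq_square)
  also have "\<dots> = ((1 + d4)^2 - ((1 + d4)^2 - 4*d2*d4)) / (4 * d4)" by (simp add: eps s2)
  also have "\<dots> = d2" using d4 by simp
  finally show "(1 - u) * (1 + d4 * u) = d2" .
  have "(1 + d4 * u)^2 - d2 * d4 = ((1 + d4)^2 + 2*eps* sq*(1 + d4) + eps^2* sq^2)/4 - d2 * d4"
    unfolding h2 by (simp add: field_simps power2_eq_square)
  also have "\<dots> = ((1 + d4)^2 + 2*eps* sq*(1 + d4) + sq^2)/4 - ((1 + d4)^2 - sq^2)/4"
    using d4 by (simp add: eps s2)
  also have "\<dots> = sq * (sq + eps * (1 + d4)) / 2"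
    by (simp add: field_simps power2_eq_square)
  finally show "(1 + d4 * u)^2 - d2 * d4 = sq * (sq + eps * (1 + d4)) / 2" .
qed

lemma SS3m:
  fixes a1 a2 b2 b3 b4 d1 d2 d4 :: real
  assumes pos: "a1 > 0" "a2 > 0" "b2 > 0" "b3 > 0" "b4 > 0" "d1 > 0" "d2 > 0" "d4 > 0"
    and D: "(1 + d4)^2 - 4 * d2 * d4 > 0"
    and u: "u = (d4 - 1 - sqrt ((1 + d4)^2 - 4 * d2 * d4)) / (2 * d4)"
  shows "lv_rhs a1 a2 b2 b3 b4 d1 d2 d4 (vec4 0 u u (1 / (1 + d4 * u))) = 0 \<and>
         lin_unstable (lv_rhs a1 a2 b2 b3 b4 d1 d2 d4) (vec4 0 u u (1 / (1 + d4 * u)))"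
proof -
  define sq where "sq = sqrt ((1 + d4)^2 - 4 * d2 * d4)"
  have s2: "sq^2 = (1 + d4)^2 - 4 * d2 * d4" using D by (simp add: sq_def)
  have s0: "sq > 0" using D by (simp add: sq_def)
  have u': "u = (d4 - 1 + (-1) * sq) / (2 * d4)" by (simp add: u sq_def)
  note alg = SS3_alg[OF pos(8) s2 u', simplified]
  define q where "q = 1 + d4 * u"
  have sl: "sq < 1 + d4"
  proof -
    have "sq^2 < (1 + d4)^2" using s2 pos by simp
    moreover have "1 + d4 \<ge> 0" using pos by simp
    ultimately show ?thesis by (rule power_less_imp_less_base)
  qed
  have q: "q = (1 + d4 - sq) / 2" using alg(2) by (simp add: q_def)
  have qpos: "q > 0" using q sl by simp
  have qq: "q^2 - d2 * d4 < 0"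
  proof -
    have "sq * (sq - (1 + d4)) < 0" using s0 sl by (simp add: mult_pos_neg)
    moreover have "q^2 - d2 * d4 = sq * (sq - (1 + d4)) / 2" using alg(3) by (simp add: q_def)
    ultimately show ?thesis by simp
  qed
  note G = SS3_gen[OF alg(1) pos(7), of a1 a2 b2 b3 b4 d1, folded q_def]
  show ?thesis
  proof
    show "lv_rhs a1 a2 b2 b3 b4 d1 d2 d4 (vec4 0 u u (1 / (1 + d4 * u))) = 0" using G(1) by (simp add: q_def)
    show "lin_unstable (lv_rhs a1 a2 b2 b3 b4 d1 d2 d4) (vec4 0 u u (1 / (1 + d4 * u)))"
      unfolding unstab_iff q_def[symmetric] G(2)
    proof (cases "1 - (a1 + d1) * u > 0")
      case True
      then show "\<exists>lam. (lam - complex_of_real (1 - (a1 + d1) * u)) * (lam + complex_of_real b3) *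
          (lam\<^sup>2 + complex_of_real (b2 * u + b4 * q) * lam + complex_of_real (b2 * b4 * u * (q - d2 * d4 / q))) = 0 \<and>
          0 < Re lam"
        by (intro exI[of _ "complex_of_real (1 - (a1 + d1) * u)"]) simp
    next
      case False
      then have "(a1 + d1) * u \<ge> 1" by simp
      then have upos: "u > 0"
      proof -
        assume h: "(a1 + d1) * u \<ge> 1"
        show "u > 0"
        proof (rule ccontr)
          assume "\<not> u > 0"
          then have "(a1 + d1) * u \<le> 0" using pos by (intro mult_nonneg_nonpos) auto
          with h show False by simp
        qed
      qed
      have "q - d2 * d4 / q = (q^2 - d2 * d4) / q" using qpos by (simp add: field_simps power2_eq_square)
      also have "\<dots> < 0" using qq qpos by (simp add: divide_neg_pos)
      finally have "b2 * b4 * u * (q - d2 * d4 / q) < 0" using pos upos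
        by (simp add: mult_pos_neg)
      then obtain x where x: "x > 0" "x^2 + (b2 * u + b4 * q) * x + b2 * b4 * u * (q - d2 * d4 / q) = 0"
        using quad_pos_root by blast
      have "complex_of_real (x^2 + (b2 * u + b4 * q) * x + b2 * b4 * u * (q - d2 * d4 / q)) = 0"
        using x(2) by simp
      then have "(complex_of_real x)\<^sup>2 + complex_of_real (b2 * u + b4 * q) * complex_of_real x + complex_of_real (b2 * b4 * u * (q - d2 * d4 / q)) = 0"
        by (simp only: of_real_add of_real_mult of_real_power)
      then show "\<exists>lam. (lam - complex_of_real (1 - (a1 + d1) * u)) * (lam + complex_of_real b3) *
          (lam\<^sup>2 + complex_of_real (b2 * u + b4 * q) * lam + complex_of_real (b2 * b4 * u * (q - d2 * d4 / q))) = 0 \<and>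
          0 < Re lam"
        using x(1) by (intro exI[of _ "complex_of_real x"]) simp
    qed
  qed
qed

lemma cubic_split:
  fixes j b3 p r :: real
  assumes "b3 > 0"
  shows "(\<forall>lam::complex. (lam - j) * (lam + b3) * (lam^2 + p * lam + r) = 0 \<longrightarrow> Re lam < 0) \<longleftrightarrow>
         j < 0 \<and> p > 0 \<and> r > 0"
proof -
  have "(\<forall>lam::complex. (lam - j) * (lam + b3) * (lam^2 + p * lam + r) = 0 \<longrightarrow> Re lam < 0) \<longleftrightarrow>
        j < 0 \<and> (\<forall>z::complex. z^2 + p * z + r = 0 \<longrightarrow> Re z < 0)"
  proof
    assume h: "\<forall>lam::complex. (lam - j) * (lam + b3) * (lam^2 + p * lam + r) = 0 \<longrightarrow> Re lam < 0"
    have "Re (complex_of_real j) < 0" by (rule h[rule_format]) simp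
    then have "j < 0" by simp
    moreover have "\<forall>z::complex. z^2 + p * z + r = 0 \<longrightarrow> Re z < 0"
    proof (intro allI impI)
      fix z :: complex assume "z^2 + p * z + r = 0"
      then show "Re z < 0" by (intro h[rule_format]) (simp only: mult_zero_right)
    qed
    ultimately show "j < 0 \<and> (\<forall>z::complex. z^2 + p * z + r = 0 \<longrightarrow> Re z < 0)" by blast
  next
    assume h: "j < 0 \<and> (\<forall>z::complex. z^2 + p * z + r = 0 \<longrightarrow> Re z < 0)"
    show "\<forall>lam::complex. (lam - j) * (lam + b3) * (lam^2 + p * lam + r) = 0 \<longrightarrow> Re lam < 0"
    proof (intro allI impI)
      fix lam :: complex assume "(lam - j) * (lam + b3) * (lam^2 + p * lam + r) = 0"
      then have "lam - j = 0 \<or> lam + b3 = 0 \<or> lam^2 + p * lam + r = 0"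
        by (simp only: mult_eq_0_iff disj_assoc)
      moreover have "lam - j = 0 \<Longrightarrow> Re lam < 0" using h by (simp add: right_minus_eq)
      moreover have "lam + b3 = 0 \<Longrightarrow> Re lam < 0"
      proof -
        assume "lam + b3 = 0"
        then have "lam = - b3" by (simp add: eq_neg_iff_add_eq_0)
        then show "Re lam < 0" using assms by simp
      qed
      moreover have "lam^2 + p * lam + r = 0 \<Longrightarrow> Re lam < 0" using h by blast
      ultimately show "Re lam < 0" by blast
    qed
  qed
  also have "\<dots> \<longleftrightarrow> j < 0 \<and> p > 0 \<and> r > 0" by (simp only: quad_roots)
  finally show ?thesis .
qed

lemma SS3p:
  fixes a1 a2 b2 b3 b4 d1 d2 d4 :: real
  assumes pos: "a1 > 0" "a2 > 0" "b2 > 0" "b3 > 0" "b4 > 0" "d1 > 0" "d2 > 0" "d4 > 0"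
    and D: "(1 + d4)^2 - 4 * d2 * d4 \<ge> 0"
    and u: "u = (d4 - 1 + sqrt ((1 + d4)^2 - 4 * d2 * d4)) / (2 * d4)"
    and a: "a = a1 + d1" and K: "K = (a + d4) * (a - 1) / a^2"
  shows "lv_rhs a1 a2 b2 b3 b4 d1 d2 d4 (vec4 0 u u (1 / (1 + d4 * u))) = 0 \<and>
         (lin_stable (lv_rhs a1 a2 b2 b3 b4 d1 d2 d4) (vec4 0 u u (1 / (1 + d4 * u))) \<longleftrightarrow>
          (d2 < K \<or> (K \<le> d2 \<and> d2 < (1 + d4)^2 / (4 * d4) \<and> 1 / d4 < (a - 2) / a)))"
proof -
  define sq where "sq = sqrt ((1 + d4)^2 - 4 * d2 * d4)"
  have s2: "sq^2 = (1 + d4)^2 - 4 * d2 * d4" using D by (simp add: sq_def)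
  have s0: "sq \<ge> 0" using D by (simp add: sq_def)
  have u': "u = (d4 - 1 + 1 * sq) / (2 * d4)" by (simp add: u sq_def)
  note alg = SS3_alg[OF pos(8) s2 u' power_one]
  define q where "q = 1 + d4 * u"
  have q: "q = (1 + d4 + sq) / 2" using alg(2) by (simp add: q_def)
  have qpos: "q > 0" using q s0 pos by simp
  have qq: "q^2 - d2 * d4 = sq * (sq + (1 + d4)) / 2" using alg(3) by (simp add: q_def)
  have apos: "a > 0" using a pos by simp
  note G = SS3_gen[OF alg(1) pos(7), of a1 a2 b2 b3 b4 d1, folded q_def]
  have stab: "lin_stable (lv_rhs a1 a2 b2 b3 b4 d1 d2 d4) (vec4 0 u u (1 / (1 + d4 * u))) \<longleftrightarrow>
        (1 - a * u < 0 \<and> b2 * u + b4 * q > 0 \<and> b2 * b4 * u * (q - d2 * d4 / q) > 0)"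
    unfolding stab_iff q_def[symmetric] G(2) a by (rule cubic_split[OF pos(4)])
  have B: "(1 - a * u < 0 \<and> b2 * u + b4 * q > 0 \<and> b2 * b4 * u * (q - d2 * d4 / q) > 0) \<longleftrightarrow>
        (a * u > 1 \<and> sq > 0)"
  proof
    assume h: "1 - a * u < 0 \<and> b2 * u + b4 * q > 0 \<and> b2 * b4 * u * (q - d2 * d4 / q) > 0"
    then have ua: "a * u > 1" by simp
    have "u > 0"
    proof (rule ccontr)
      assume "\<not> u > 0"
      then have "a * u \<le> 0" using apos by (intro mult_nonneg_nonpos) auto
      with \<open>a * u > 1\<close> show False by simp
    qed
    then have "b2 * b4 * u > 0" using pos by simp
    moreover have "b2 * b4 * u * (q - d2 * d4 / q) > 0" using h by simp
    ultimately have "q - d2 * d4 / q > 0" using zero_less_mult_pos by blast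
    then have "q^2 - d2 * d4 > 0" using qpos by (simp add: field_simps power2_eq_square)
    then have "sq \<noteq> 0" using qq by auto
    then have "sq > 0" using s0 by simp
    with ua show "a * u > 1 \<and> sq > 0" by simp
  next
    assume h: "a * u > 1 \<and> sq > 0"
    have upos: "u > 0"
    proof (rule ccontr)
      assume "\<not> u > 0"
      then have "a * u \<le> 0" using apos by (intro mult_nonneg_nonpos) auto
      with h show False by simp
    qed
    have "sq * (sq + (1 + d4)) > 0" using h pos by (intro mult_pos_pos) auto
    then have "q^2 - d2 * d4 > 0" using qq by simp
    then have "q - d2 * d4 / q > 0" using qpos by (simp add: field_simps power2_eq_square)
    moreover have "b2 * u + b4 * q > 0" using pos upos qpos by (simp add: add_pos_pos)
    moreover have "b2 * b4 * u > 0" using pos upos by simp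
    ultimately show "1 - a * u < 0 \<and> b2 * u + b4 * q > 0 \<and> b2 * b4 * u * (q - d2 * d4 / q) > 0"
      using h by simp
  qed
  define t where "t = 2 * d4 - a * (d4 - 1)"
  have X: "a * u > 1 \<longleftrightarrow> a * sq > t"
  proof -
    have h2: "d4 - 1 + sq = 2 * d4 * u" using pos by (simp add: u' field_simps)
    have "a * (d4 - 1 + sq) = a * (2 * d4 * u)" by (simp only: h2)
    also have "\<dots> = 2 * d4 * (a * u)" by (simp add: algebra_simps)
    finally have e: "a * (d4 - 1 + sq) = 2 * d4 * (a * u)" .
    have "a * (d4 - 1 + sq) > 2 * d4 \<longleftrightarrow> 2 * d4 * (a * u) > 2 * d4 * 1" unfolding e by simp
    also have "\<dots> \<longleftrightarrow> a * u > 1" using pos by (intro mult_less_cancel_left_pos) simp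
    finally have "a * u > 1 \<longleftrightarrow> a * (d4 - 1 + sq) > 2 * d4" by simp
    then show ?thesis by (simp add: t_def algebra_simps)
  qed
  have sqd: "(a * sq)^2 - t^2 = 4 * d4 * ((a - 1) * (a + d4) - a^2 * d2)"
  proof -
    have "(a * sq)^2 = a^2 * ((1 + d4)^2 - 4 * d2 * d4)" by (simp add: power_mult_distrib s2)
    then show ?thesis by (simp add: t_def algebra_simps power2_eq_square)
  qed
  have W: "d2 < K \<longleftrightarrow> (a * sq)^2 - t^2 > 0"
  proof -
    have "d2 < K \<longleftrightarrow> a^2 * d2 < (a + d4) * (a - 1)" using apos by (simp add: K field_simps)
    also have "\<dots> \<longleftrightarrow> (a - 1) * (a + d4) - a^2 * d2 > 0" by (simp add: algebra_simps)
    also have "\<dots> \<longleftrightarrow> (a * sq)^2 - t^2 > 0" unfolding sqd using pos by (simp add: zero_less_mult_iff)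
    finally show ?thesis .
  qed
  have Y: "sq > 0 \<longleftrightarrow> d2 < (1 + d4)^2 / (4 * d4)"
  proof -
    have "sq > 0 \<longleftrightarrow> (1 + d4)^2 - 4 * d2 * d4 > 0" by (simp add: sq_def)
    also have "\<dots> \<longleftrightarrow> d2 < (1 + d4)^2 / (4 * d4)" using pos by (simp add: field_simps)
    finally show ?thesis .
  qed
  have Z: "1 / d4 < (a - 2) / a \<longleftrightarrow> t < 0"
  proof -
    have "1 / d4 < (a - 2) / a \<longleftrightarrow> a < d4 * (a - 2)" using pos apos by (simp add: field_simps)
    then show ?thesis by (simp add: t_def algebra_simps)
  qed
  have asq: "a * sq \<ge> 0" using apos s0 by simp
  have logic: "(a * sq > t \<and> sq > 0) \<longleftrightarrow> ((a * sq)^2 - t^2 > 0 \<or> (\<not> (a * sq)^2 - t^2 > 0 \<and> sq > 0 \<and> t < 0))"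
  proof -
    have w1: "(a * sq)^2 - t^2 > 0 \<Longrightarrow> sq > 0" using s0 by (cases "sq = 0") (auto simp: power2_eq_square)
    have w2: "(a * sq)^2 - t^2 > 0 \<Longrightarrow> a * sq > t"
    proof -
      assume h: "(a * sq)^2 - t^2 > 0"
      show "a * sq > t"
      proof (cases "t < 0")
        case True then show ?thesis using asq by simp
      next
        case False
        have "t^2 < (a * sq)^2" using h by simp
        then show ?thesis by (rule power_less_imp_less_base[OF _ asq])
      qed
    qed
    have w3: "a * sq > t \<Longrightarrow> t \<ge> 0 \<Longrightarrow> (a * sq)^2 - t^2 > 0"
    proof -
      assume "a * sq > t" "t \<ge> 0"
      then have "t^2 < (a * sq)^2" using power_strict_mono[of t "a * sq" 2] by simp
      then show ?thesis by simp
    qed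
    show ?thesis using w1 w2 w3 asq by linarith
  qed
  show ?thesis
  proof
    show "lv_rhs a1 a2 b2 b3 b4 d1 d2 d4 (vec4 0 u u (1 / (1 + d4 * u))) = 0" using G(1) by (simp add: q_def)
    show "lin_stable (lv_rhs a1 a2 b2 b3 b4 d1 d2 d4) (vec4 0 u u (1 / (1 + d4 * u))) \<longleftrightarrow>
          (d2 < K \<or> (K \<le> d2 \<and> d2 < (1 + d4)^2 / (4 * d4) \<and> 1 / d4 < (a - 2) / a))"
    proof -
      have fin: "(a * sq > t \<and> sq > 0) \<longleftrightarrow> (d2 < K \<or> (K \<le> d2 \<and> d2 < (1 + d4)^2 / (4 * d4) \<and> 1 / d4 < (a - 2) / a))"
        unfolding not_less[symmetric] W Y[symmetric] Z by (rule logic)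
      show ?thesis unfolding stab B X by (rule fin)
    qed
  qed
qed

lemma SS4_gen:
  fixes u :: real and lam :: complex
  assumes st: "(1 - u - a2 * (1 - (a1 + d1) * u)) * (1 + d4 * u) = d2" and d2: "d2 > 0"
  defines "q \<equiv> 1 + d4 * u" and "b \<equiv> 1 - (a1 + d1) * u" and "A \<equiv> 1 - a2 * (a1 + d1)"
  shows "lv_rhs a1 a2 b2 b3 b4 d1 d2 d4 (vec4 b u u (1 / q)) = 0"
    "is_eigenvalue (JL a1 a2 b2 b3 b4 d1 d2 d4 (vec4 b u u (1 / q))) lam \<longleftrightarrow>
     lam^4 + (b + b3 + b2 * u + b4 * q) * lam^3
     + (b3 * (b2 * u + b4 * q) + b * (b3 + b4 * q + b2 * u * (1 - a2 * a1))
                + b2 * b4 * u / q * (q^2 - d2 * d4)) * lam^2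
     + (b * (b2 * b4 * u / q * (q^2 * (1 - a2 * a1) - d2 * d4) + b3 * b4 * q)
                + b2 * b3 * u * b * A + b2 * b3 * b4 * u / q * (q^2 - d2 * d4)) * lam
     + b2 * b3 * b4 * u / q * b * (q^2 * A - d2 * d4) = 0"
proof -
  define m where "m = 1 - u - a2 * b"
  have st': "d2 = m * q" using st by (simp add: m_def q_def b_def)
  have q0: "q \<noteq> 0" using st' d2 by auto
  have mq: "d2 / q = m" using q0 by (simp add: st')
  have e1: "b * (1 - b - a1 * u - d1 * u) = 0" by (simp add: b_def algebra_simps)
  show "lv_rhs a1 a2 b2 b3 b4 d1 d2 d4 (vec4 b u u (1 / q)) = 0"
  proof -
    have "1 - u - a2 * b - d2 * (1 / q) = 0" using mq by (simp add: m_def)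
    moreover have "1 - 1 / q - d4 * (1 / q) * u = 0" using q0 by (simp add: q_def field_simps)
    ultimately show ?thesis using e1 by (simp add: lv_rhs_def vec4_eq0)
  qed
  have JLeq: "JL a1 a2 b2 b3 b4 d1 d2 d4 (vec4 b u u (1 / q)) =
      SM (-b) (-a1*b) (-d1*b) (-b2*a2*u) (-b2*u) (-b2*d2*u) b3 (-b3) (-b4*d4/q) (-b4*q)"
  proof -
    have x1: "1 - 2 * b - a1 * u - d1 * u = -b" by (simp add: b_def algebra_simps)
    have "b2 * (1 - 2 * u - a2 * b - d2 * (1 / q)) = b2 * (m - u - d2 / q)" by (simp add: m_def algebra_simps)
    also have "\<dots> = -b2 * u" by (simp add: mq)
    finally have x2: "b2 * (1 - 2 * u - a2 * b - d2 * (1 / q)) = -b2 * u" .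
    have x3: "- b4 * (1 + d4 * u) = -b4 * q" by (simp add: q_def)
    show ?thesis unfolding JL_SM vec4_nth x1 x2 x3 by simp
  qed
  define w where "w = 1 / q"
  have JLeq': "JL a1 a2 b2 b3 b4 d1 d2 d4 (vec4 b u u (1 / q)) =
      SM (-b) (-a1*b) (-d1*b) (-b2*a2*u) (-b2*u) (-b2*d2*u) b3 (-b3) (-b4*d4*w) (-b4*q)"
    unfolding JLeq by (simp add: w_def)
  define K3 where "K3 = b + b3 + b2 * u + b4 * q"
  define K2 where "K2 = b * b3 + (b + b3) * (b2 * u + b4 * q) + b2 * b4 * u * (q - d2 * d4 * w) - a1 * a2 * b2 * b * u"
  define K1 where "K1 = b * b3 * (b2 * u + b4 * q) + (b + b3) * b2 * b4 * u * (q - d2 * d4 * w)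
      - a1 * a2 * b2 * b * u * (b3 + b4 * q) - a2 * b2 * b3 * d1 * b * u"
  define K0 where "K0 = b * b3 * b2 * b4 * u * (q - d2 * d4 * w) - a1 * a2 * b2 * b * u * b3 * b4 * q
      - a2 * b2 * b3 * d1 * b * u * b4 * q"
  have cp: "is_eigenvalue (JL a1 a2 b2 b3 b4 d1 d2 d4 (vec4 b u u (1 / q))) lam \<longleftrightarrow>
     lam^4 + K3 * lam^3 + K2 * lam^2 + K1 * lam + K0 = 0"
    unfolding JLeq' eig_SM K3_def K2_def K1_def K0_def
    by (simp add: algebra_simps power2_eq_square power3_eq_cube power4_eq_xxxx)
  have k3: "K3 = b + b3 + b2 * u + b4 * q" by (simp add: K3_def)
  have k2: "K2 = b3 * (b2 * u + b4 * q) + b * (b3 + b4 * q + b2 * u * (1 - a2 * a1))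
                + b2 * b4 * u / q * (q^2 - d2 * d4)"
    unfolding K2_def w_def using q0 by (simp add: field_simps power2_eq_square)
  have k1: "K1 = b * (b2 * b4 * u / q * (q^2 * (1 - a2 * a1) - d2 * d4) + b3 * b4 * q)
                + b2 * b3 * u * b * A + b2 * b3 * b4 * u / q * (q^2 - d2 * d4)"
    unfolding K1_def w_def A_def using q0 by (simp add: field_simps power2_eq_square)
  have k0: "K0 = b2 * b3 * b4 * u / q * b * (q^2 * A - d2 * d4)"
    unfolding K0_def w_def A_def using q0 by (simp add: field_simps power2_eq_square)
  show "is_eigenvalue (JL a1 a2 b2 b3 b4 d1 d2 d4 (vec4 b u u (1 / q))) lam \<longleftrightarrow>
     lam^4 + (b + b3 + b2 * u + b4 * q) * lam^3
     + (b3 * (b2 * u + b4 * q) + b * (b3 + b4 * q + b2 * u * (1 - a2 * a1))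
                + b2 * b4 * u / q * (q^2 - d2 * d4)) * lam^2
     + (b * (b2 * b4 * u / q * (q^2 * (1 - a2 * a1) - d2 * d4) + b3 * b4 * q)
                + b2 * b3 * u * b * A + b2 * b3 * b4 * u / q * (q^2 - d2 * d4)) * lam
     + b2 * b3 * b4 * u / q * b * (q^2 * A - d2 * d4) = 0"
    unfolding cp k3[symmetric] k2[symmetric] k1[symmetric] k0[symmetric] ..
qed

lemma SS4_alg:
  fixes a A u S d2 d4 a2 eps :: real
  assumes d4: "d4 > 0" and A0: "A \<noteq> 0" and AA: "A = 1 - a2 * a"
    and S2: "S^2 = (A - d4 * (a2 - 1))^2 - 4 * d2 * d4 * A" and eps: "eps^2 = 1"
    and u: "u = (- A - d4 * (a2 - 1) + eps * S) / (2 * d4 * A)"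
  shows "(1 - u - a2 * (1 - a * u)) * (1 + d4 * u) = d2"
    "(1 + d4 * u)^2 * A - d2 * d4 = eps * (1 + d4 * u) * S"
proof -
  define E where "E = A - d4 * (a2 - 1)"
  define q where "q = 1 + d4 * u"
  define m where "m = 1 - u - a2 * (1 - a * u)"
  have hq: "2 * A * q = E + eps * S" using d4 A0 by (simp add: q_def u E_def field_simps)
  have hm0: "m = (1 - a2) - A * u" by (simp add: m_def AA algebra_simps)
  have hu: "2 * d4 * A * u = - A - d4 * (a2 - 1) + eps * S" using d4 A0 by (simp add: u field_simps)
  have hm: "2 * d4 * m = E - eps * S"
  proof -
    have "2 * d4 * m = 2 * d4 * (1 - a2) - 2 * d4 * A * u" by (simp add: hm0 algebra_simps)
    also have "\<dots> = E - eps * S" unfolding hu by (simp add: E_def algebra_simps)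
    finally show ?thesis .
  qed
  have "(4 * A * d4) * (m * q) = (2 * d4 * m) * (2 * A * q)" by (simp add: algebra_simps)
  also have "\<dots> = E^2 - eps^2 * S^2" unfolding hq hm by (simp add: algebra_simps power2_eq_square)
  also have "\<dots> = (4 * A * d4) * d2" unfolding eps S2 E_def by (simp add: algebra_simps)
  finally have "m * q = d2" using d4 A0 by simp
  then show st: "(1 - u - a2 * (1 - a * u)) * (1 + d4 * u) = d2" by (simp add: m_def q_def)
  have "2 * (q^2 * A - d2 * d4) = q * (2 * A * q) - q * (2 * d4 * m)"
    using \<open>m * q = d2\<close> by (simp add: algebra_simps power2_eq_square)
  also have "\<dots> = 2 * (eps * q * S)" unfolding hq hm by (simp add: algebra_simps)
  finally show "(1 + d4 * u)^2 * A - d2 * d4 = eps * (1 + d4 * u) * S" by (simp add: q_def)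
qed

lemma SS4_setup:
  fixes a1 a2 b2 b3 b4 d1 d2 d4 :: real
  assumes pos: "a1 > 0" "a2 > 0" "b2 > 0" "b3 > 0" "b4 > 0" "d1 > 0" "d2 > 0" "d4 > 0"
    and A0: "1 - a2 * (a1 + d1) \<noteq> 0"
    and D: "(1 - a2 * (a1 + d1) - d4 * (a2 - 1))^2 - 4 * d2 * d4 * (1 - a2 * (a1 + d1)) \<ge> 0"
    and a: "a = a1 + d1" and AA: "A = 1 - a2 * a"
    and u: "u = (- A - d4 * (a2 - 1) + eps * sqrt ((A - d4 * (a2 - 1))^2 - 4 * d2 * d4 * A)) / (2 * d4 * A)"
    and eps: "eps^2 = 1"
    and q: "q = 1 + d4 * u" and b: "b = 1 - a * u"
    and c3: "c3 = b + b3 + b2 * u + b4 * q"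
    and c2: "c2 = b3 * (b2 * u + b4 * q) + b * (b3 + b4 * q + b2 * u * (1 - a2 * a1))
                + b2 * b4 * u / q * (q^2 - d2 * d4)"
    and c1: "c1 = b * (b2 * b4 * u / q * (q^2 * (1 - a2 * a1) - d2 * d4) + b3 * b4 * q)
                + b2 * b3 * u * b * A + b2 * b3 * b4 * u / q * (q^2 - d2 * d4)"
    and c0: "c0 = b2 * b3 * b4 * u / q * b * (q^2 * A - d2 * d4)"
  shows "lv_rhs a1 a2 b2 b3 b4 d1 d2 d4 (vec4 (1 - a * u) u u (1 / (1 + d4 * u))) = 0"
    "lin_stable (lv_rhs a1 a2 b2 b3 b4 d1 d2 d4) (vec4 (1 - a * u) u u (1 / (1 + d4 * u))) \<longleftrightarrow>
       (c3 > 0 \<and> c1 > 0 \<and> c0 > 0 \<and> c1 * c2 * c3 > c1^2 + c3^2 * c0)"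
    "q \<noteq> 0" "c0 = b2 * b3 * b4 * u * b * (eps * sqrt ((A - d4 * (a2 - 1))^2 - 4 * d2 * d4 * A))"
    "q^2 * A - d2 * d4 = eps * q * sqrt ((A - d4 * (a2 - 1))^2 - 4 * d2 * d4 * A)"
    "(1 - u - a2 * b) * q = d2"
proof -
  define S where "S = sqrt ((A - d4 * (a2 - 1))^2 - 4 * d2 * d4 * A)"
  have A0': "A \<noteq> 0" using A0 by (simp add: AA a)
  have D': "(A - d4 * (a2 - 1))^2 - 4 * d2 * d4 * A \<ge> 0" using D by (simp add: AA a)
  have S2: "S^2 = (A - d4 * (a2 - 1))^2 - 4 * d2 * d4 * A" unfolding S_def using D' by (rule real_sqrt_pow2)
  have u': "u = (- A - d4 * (a2 - 1) + eps * S) / (2 * d4 * A)" by (simp add: u S_def)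
  note alg = SS4_alg[OF pos(8) A0' AA S2 eps u']
  have st: "(1 - u - a2 * (1 - (a1 + d1) * u)) * (1 + d4 * u) = d2" using alg(1) by (simp add: a)
  note G = SS4_gen[OF st pos(7)]
  have q0: "q \<noteq> 0" using alg(1) pos q by auto
  then show "q \<noteq> 0" .
  show "(1 - u - a2 * b) * q = d2" using alg(1) by (simp add: q b)
  show qS: "q^2 * A - d2 * d4 = eps * q * sqrt ((A - d4 * (a2 - 1))^2 - 4 * d2 * d4 * A)"
    using alg(2) by (simp add: q S_def)
  show "c0 = b2 * b3 * b4 * u * b * (eps * sqrt ((A - d4 * (a2 - 1))^2 - 4 * d2 * d4 * A))"
    unfolding c0 qS using q0 by (simp add: field_simps)
  show "lv_rhs a1 a2 b2 b3 b4 d1 d2 d4 (vec4 (1 - a * u) u u (1 / (1 + d4 * u))) = 0"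
    using G(1) by (simp add: a)
  have P: "vec4 (1 - a * u) u u (1 / (1 + d4 * u)) = vec4 (1 - (a1 + d1) * u) u u (1 / (1 + d4 * u))"
    by (simp add: a)
  have AA': "1 - a2 * (a1 + d1) = A" by (simp add: AA a)
  have bb: "1 - (a1 + d1) * u = b" by (simp add: b a)
  show "lin_stable (lv_rhs a1 a2 b2 b3 b4 d1 d2 d4) (vec4 (1 - a * u) u u (1 / (1 + d4 * u))) \<longleftrightarrow>
       (c3 > 0 \<and> c1 > 0 \<and> c0 > 0 \<and> c1 * c2 * c3 > c1^2 + c3^2 * c0)"
    apply (unfold P stab_iff G(2))
    apply (unfold AA' bb q[symmetric])
    apply (unfold c3[symmetric] c2[symmetric] c1[symmetric] c0[symmetric])
    apply (rule hurwitz4)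
    done
qed

lemma SS4m:
  fixes a1 a2 b2 b3 b4 d1 d2 d4 :: real
  assumes pos: "a1 > 0" "a2 > 0" "b2 > 0" "b3 > 0" "b4 > 0" "d1 > 0" "d2 > 0" "d4 > 0"
    and A0: "1 - a2 * (a1 + d1) \<noteq> 0"
    and D: "(1 - a2 * (a1 + d1) - d4 * (a2 - 1))^2 - 4 * d2 * d4 * (1 - a2 * (a1 + d1)) \<ge> 0"
    and a: "a = a1 + d1" and AA: "A = 1 - a2 * a"
    and u: "u = (- A - d4 * (a2 - 1) - sqrt ((A - d4 * (a2 - 1))^2 - 4 * d2 * d4 * A)) / (2 * d4 * A)"
  shows "lv_rhs a1 a2 b2 b3 b4 d1 d2 d4 (vec4 (1 - a * u) u u (1 / (1 + d4 * u))) = 0 \<and>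
    ((\<forall>i. vec4 (1 - a * u) u u (1 / (1 + d4 * u)) $ i > 0) \<longrightarrow>
      \<not> lin_stable (lv_rhs a1 a2 b2 b3 b4 d1 d2 d4) (vec4 (1 - a * u) u u (1 / (1 + d4 * u))))"
proof -
  define q where "q = 1 + d4 * u"
  define b where "b = 1 - a * u"
  define c3 where "c3 = b + b3 + b2 * u + b4 * q"
  define c2 where "c2 = b3 * (b2 * u + b4 * q) + b * (b3 + b4 * q + b2 * u * (1 - a2 * a1))
                + b2 * b4 * u / q * (q^2 - d2 * d4)"
  define c1 where "c1 = b * (b2 * b4 * u / q * (q^2 * (1 - a2 * a1) - d2 * d4) + b3 * b4 * q)
                + b2 * b3 * u * b * A + b2 * b3 * b4 * u / q * (q^2 - d2 * d4)"
  define c0 where "c0 = b2 * b3 * b4 * u / q * b * (q^2 * A - d2 * d4)"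
  have u': "u = (- A - d4 * (a2 - 1) + (-1) * sqrt ((A - d4 * (a2 - 1))^2 - 4 * d2 * d4 * A)) / (2 * d4 * A)"
    by (simp add: u)
  have m1: "(-1::real)^2 = 1" by simp
  note T = SS4_setup[OF pos A0 D a AA u' m1 q_def b_def c3_def c2_def c1_def c0_def]
  show ?thesis
  proof (intro conjI impI)
    show "lv_rhs a1 a2 b2 b3 b4 d1 d2 d4 (vec4 (1 - a * u) u u (1 / (1 + d4 * u))) = 0" by (rule T(1))
    assume h: "\<forall>i. vec4 (1 - a * u) u u (1 / (1 + d4 * u)) $ i > 0"
    have bpos: "b > 0" using h[rule_format, of 1] by (simp add: b_def)
    have upos: "u > 0" using h[rule_format, of 2] by simp
    have D': "(A - d4 * (a2 - 1))^2 - 4 * d2 * d4 * A \<ge> 0" using D by (simp add: AA a)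
    then have "sqrt ((A - d4 * (a2 - 1))^2 - 4 * d2 * d4 * A) \<ge> 0" by simp
    then have "c0 \<le> 0" unfolding T(4) using pos bpos upos
      by (simp add: mult_nonneg_nonpos)
    then show "\<not> lin_stable (lv_rhs a1 a2 b2 b3 b4 d1 d2 d4) (vec4 (1 - a * u) u u (1 / (1 + d4 * u)))"
      unfolding T(2) by simp
  qed
qed

lemma SS4p:
  fixes a1 a2 b2 b3 b4 d1 d2 d4 :: real
  assumes pos: "a1 > 0" "a2 > 0" "b2 > 0" "b3 > 0" "b4 > 0" "d1 > 0" "d2 > 0" "d4 > 0"
    and A0: "1 - a2 * (a1 + d1) \<noteq> 0"
    and D: "(1 - a2 * (a1 + d1) - d4 * (a2 - 1))^2 - 4 * d2 * d4 * (1 - a2 * (a1 + d1)) \<ge> 0"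
    and a: "a = a1 + d1" and AA: "A = 1 - a2 * a"
    and u: "u = (- A - d4 * (a2 - 1) + sqrt ((A - d4 * (a2 - 1))^2 - 4 * d2 * d4 * A)) / (2 * d4 * A)"
    and q: "q = 1 + d4 * u" and b: "b = 1 - a * u"
    and c3: "c3 = b + b3 + b2 * u + b4 * q"
    and c2: "c2 = b3 * (b2 * u + b4 * q) + b * (b3 + b4 * q + b2 * u * (1 - a2 * a1))
                + b2 * b4 * u / q * (q^2 - d2 * d4)"
    and c1: "c1 = b * (b2 * b4 * u / q * (q^2 * (1 - a2 * a1) - d2 * d4) + b3 * b4 * q)
                + b2 * b3 * u * b * A + b2 * b3 * b4 * u / q * (q^2 - d2 * d4)"
    and c0: "c0 = b2 * b3 * b4 * u / q * b * (q^2 * A - d2 * d4)"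
  shows "lv_rhs a1 a2 b2 b3 b4 d1 d2 d4 (vec4 (1 - a * u) u u (1 / (1 + d4 * u))) = 0 \<and>
    (lin_stable (lv_rhs a1 a2 b2 b3 b4 d1 d2 d4) (vec4 (1 - a * u) u u (1 / (1 + d4 * u))) \<longleftrightarrow>
      (0 < a * u \<and> a * u < 1 \<and> 0 < d2 \<and> d2 < (A - d4 * (a2 - 1))^2 / (4 * d4 * A) \<and>
       c1 * c2 * c3 > c3^2 * c0 + c1^2))"
proof -
  define Sv where "Sv = sqrt ((A - d4 * (a2 - 1))^2 - 4 * d2 * d4 * A)"
  have u': "u = (- A - d4 * (a2 - 1) + 1 * sqrt ((A - d4 * (a2 - 1))^2 - 4 * d2 * d4 * A)) / (2 * d4 * A)"
    by (simp add: u)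
  note T = SS4_setup[OF pos A0 D a AA u' power_one q b c3 c2 c1 c0, folded Sv_def]
  have D': "(A - d4 * (a2 - 1))^2 - 4 * d2 * d4 * A \<ge> 0" using D by (simp add: AA a)
  have S0: "Sv \<ge> 0" using D' by (simp add: Sv_def)
  have S2: "Sv^2 = (A - d4 * (a2 - 1))^2 - 4 * d2 * d4 * A" using D' by (simp add: Sv_def)
  have apos: "a > 0" using pos a by simp
  have c0S: "c0 = b2 * b3 * b4 * (u * b * Sv)" using T(4) by simp
  have qS: "q^2 * A - d2 * d4 = q * Sv" using T(5) by simp
  have F: "u > 0 \<and> b > 0 \<and> Sv > 0 \<and> A > 0 \<and> q > 0" if h: "c0 > 0"
  proof -
    have "b2 * b3 * b4 > 0" using pos by simp
    moreover have "(b2 * b3 * b4) * (u * b * Sv) > 0" using h c0S by simp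
    ultimately have ubs: "(u * b) * Sv > 0" using zero_less_mult_pos by blast
    then have "Sv \<noteq> 0" by auto
    then have Sp: "Sv > 0" using S0 by simp
    have ubS: "u * b > 0" "Sv > 0" using ubs Sp zero_less_mult_pos2 by blast+
    have upos: "u > 0"
    proof (rule ccontr)
      assume nu: "\<not> u > 0"
      then have "a * u \<le> 0" using apos by (intro mult_nonneg_nonpos) auto
      then have "b > 0" by (simp add: b)
      with ubS(1) nu show False by (simp add: zero_less_mult_iff)
    qed
    then have bpos: "b > 0" using ubS(1) by (simp add: zero_less_mult_iff)
    have qpos: "q > 0" using upos pos by (simp add: q add_pos_pos)
    have "q * Sv > 0" using qpos ubS(2) by simp
    then have "q^2 * A > d2 * d4" using qS by simp
    moreover have "d2 * d4 > 0" using pos by simp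
    ultimately have "q^2 * A > 0" by linarith
    then have Apos: "A > 0" by (simp add: zero_less_mult_iff)
    show ?thesis using upos bpos ubS(2) Apos qpos by simp
  qed
  have key: "c0 > 0 \<longleftrightarrow> (0 < a * u \<and> a * u < 1 \<and> d2 < (A - d4 * (a2 - 1))^2 / (4 * d4 * A))"
  proof
    assume h: "c0 > 0"
    note f = F[OF h]
    have "Sv^2 > 0" using f by simp
    then have "4 * d2 * d4 * A < (A - d4 * (a2 - 1))^2" using S2 by simp
    then have "d2 < (A - d4 * (a2 - 1))^2 / (4 * d4 * A)" using pos f by (simp add: field_simps)
    moreover have "0 < a * u" using apos f by simp
    moreover have "a * u < 1" using f by (simp add: b)
    ultimately show "0 < a * u \<and> a * u < 1 \<and> d2 < (A - d4 * (a2 - 1))^2 / (4 * d4 * A)" by simp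
  next
    assume h: "0 < a * u \<and> a * u < 1 \<and> d2 < (A - d4 * (a2 - 1))^2 / (4 * d4 * A)"
    have upos: "u > 0" using h apos by (simp add: zero_less_mult_iff)
    have bpos: "b > 0" using h by (simp add: b)
    have Apos: "A > 0"
    proof (rule ccontr)
      assume "\<not> A > 0"
      then have "4 * d4 * A \<le> 0" using pos by (simp add: mult_nonneg_nonpos)
      then have "(A - d4 * (a2 - 1))^2 / (4 * d4 * A) \<le> 0" by (simp add: divide_nonneg_nonpos)
      with h pos show False by simp
    qed
    have "4 * d2 * d4 * A < (A - d4 * (a2 - 1))^2" using h pos Apos by (simp add: field_simps)
    then have "Sv > 0" unfolding Sv_def by simp
    then show "c0 > 0" unfolding c0S using pos upos bpos by simp
  qed
  have pos_c31: "c3 > 0 \<and> c1 > 0" if h: "c0 > 0"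
  proof -
    note f = F[OF h]
    have upos: "u > 0" and bpos: "b > 0" and Spos: "Sv > 0" and Apos: "A > 0" and qpos: "q > 0"
      using f by auto
    have qA: "q^2 * A - d2 * d4 > 0" using qS qpos Spos by simp
    have Alt1: "A < 1" using pos apos by (simp add: AA)
    have q2: "q^2 > 0" using qpos by simp
    have i1: "q^2 * (1 - a2 * a1) - d2 * d4 > 0"
    proof -
      have "1 - a2 * a1 \<ge> A" using pos by (simp add: AA a algebra_simps)
      then have "q^2 * (1 - a2 * a1) \<ge> q^2 * A" using q2 by (simp add: mult_left_mono)
      then show ?thesis using qA by linarith
    qed
    have i2: "q^2 - d2 * d4 > 0"
    proof -
      have "q^2 * A < q^2" using q2 Alt1 by simp
      then show ?thesis using qA by linarith
    qed
    have uq: "u / q > 0" using upos qpos by simp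
    have "c3 > 0" unfolding c3 using bpos pos upos qpos by (simp add: add_pos_pos)
    moreover have "c1 > 0"
    proof -
      have "b2 * b4 * u / q > 0" using pos upos qpos by simp
      then have "b2 * b4 * u / q * (q^2 * (1 - a2 * a1) - d2 * d4) > 0"
        using i1 by (rule mult_pos_pos)
      moreover have "b3 * b4 * q > 0" using pos qpos by simp
      ultimately have t1: "b * (b2 * b4 * u / q * (q^2 * (1 - a2 * a1) - d2 * d4) + b3 * b4 * q) > 0"
        using bpos by (simp add: add_pos_pos)
      have t2: "b2 * b3 * u * b * A > 0" using pos upos bpos Apos by simp
      have "b2 * b3 * b4 * u / q > 0" using pos upos qpos by simp
      then have t3: "b2 * b3 * b4 * u / q * (q^2 - d2 * d4) > 0" using i2 by (rule mult_pos_pos)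
      show ?thesis unfolding c1 using t1 t2 t3 by simp
    qed
    ultimately show ?thesis by simp
  qed
  show ?thesis
  proof
    show "lv_rhs a1 a2 b2 b3 b4 d1 d2 d4 (vec4 (1 - a * u) u u (1 / (1 + d4 * u))) = 0" by (rule T(1))
    show "lin_stable (lv_rhs a1 a2 b2 b3 b4 d1 d2 d4) (vec4 (1 - a * u) u u (1 / (1 + d4 * u))) \<longleftrightarrow>
      (0 < a * u \<and> a * u < 1 \<and> 0 < d2 \<and> d2 < (A - d4 * (a2 - 1))^2 / (4 * d4 * A) \<and>
       c1 * c2 * c3 > c3^2 * c0 + c1^2)"
      unfolding T(2)
    proof
      assume h: "c3 > 0 \<and> c1 > 0 \<and> c0 > 0 \<and> c1 * c2 * c3 > c1^2 + c3^2 * c0"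
      then have "0 < a * u \<and> a * u < 1 \<and> d2 < (A - d4 * (a2 - 1))^2 / (4 * d4 * A)" using key by blast
      moreover have "c1 * c2 * c3 > c3^2 * c0 + c1^2" using h by (simp add: add.commute)
      ultimately show "0 < a * u \<and> a * u < 1 \<and> 0 < d2 \<and> d2 < (A - d4 * (a2 - 1))^2 / (4 * d4 * A) \<and>
       c1 * c2 * c3 > c3^2 * c0 + c1^2" using pos(7) by simp
    next
      assume h: "0 < a * u \<and> a * u < 1 \<and> 0 < d2 \<and> d2 < (A - d4 * (a2 - 1))^2 / (4 * d4 * A) \<and>
       c1 * c2 * c3 > c3^2 * c0 + c1^2"
      then have c0p: "c0 > 0" using key by blast
      then have "c3 > 0 \<and> c1 > 0" by (rule pos_c31)
      moreover have "c1 * c2 * c3 > c1^2 + c3^2 * c0" using h by (simp add: add.commute)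
      ultimately show "c3 > 0 \<and> c1 > 0 \<and> c0 > 0 \<and> c1 * c2 * c3 > c1^2 + c3^2 * c0" using c0p by simp
    qed
  qed
qed

theorem lemmaC1:
  fixes alpha1 alpha2 beta2 beta3 beta4 delta1 delta2 delta4 :: real
  assumes pos: "alpha1 > 0" "alpha2 > 0" "beta2 > 0" "beta3 > 0" "beta4 > 0"
               "delta1 > 0" "delta2 > 0" "delta4 > 0"
  defines "F \<equiv> lv_rhs alpha1 alpha2 beta2 beta3 beta4 delta1 delta2 delta4"
  shows "(F (vec4 0 0 0 1) = 0 \<and> lin_unstable F (vec4 0 0 0 1)) \<and>
    (F (vec4 1 0 0 1) = 0 \<and> (lin_stable F (vec4 1 0 0 1) \<longleftrightarrow> alpha2 + delta2 > 1)) \<and>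
    ((1 + delta4)^2 - 4 * delta2 * delta4 > 0 \<longrightarrow>
      (let u = (delta4 - 1 - sqrt ((1 + delta4)^2 - 4 * delta2 * delta4)) / (2 * delta4);
           P = vec4 0 u u (1 / (1 + delta4 * u))
       in F P = 0 \<and> lin_unstable F P)) \<and>
    ((1 + delta4)^2 - 4 * delta2 * delta4 \<ge> 0 \<longrightarrow>
      (let u = (delta4 - 1 + sqrt ((1 + delta4)^2 - 4 * delta2 * delta4)) / (2 * delta4);
           P = vec4 0 u u (1 / (1 + delta4 * u));
           a = alpha1 + delta1;
           K = (a + delta4) * (a - 1) / a^2
       in F P = 0 \<and>
          (lin_stable F P \<longleftrightarrow>
             (delta2 < K \<or>
              (K \<le> delta2 \<and> delta2 < (1 + delta4)^2 / (4 * delta4) \<and> 1 / delta4 < (a - 2) / a))))) \<and>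
    (1 - alpha2 * (alpha1 + delta1) \<noteq> 0 \<longrightarrow>
      (1 - alpha2 * (alpha1 + delta1) - delta4 * (alpha2 - 1))^2
        - 4 * delta2 * delta4 * (1 - alpha2 * (alpha1 + delta1)) \<ge> 0 \<longrightarrow>
      (let a = alpha1 + delta1;
           A = 1 - alpha2 * a;
           u = (- A - delta4 * (alpha2 - 1) - sqrt ((A - delta4 * (alpha2 - 1))^2 - 4 * delta2 * delta4 * A))
               / (2 * delta4 * A);
           P = vec4 (1 - a * u) u u (1 / (1 + delta4 * u))
       in F P = 0 \<and> ((\<forall>i. P $ i > 0) \<longrightarrow> \<not> lin_stable F P))) \<and>
    (1 - alpha2 * (alpha1 + delta1) \<noteq> 0 \<longrightarrow>
      (1 - alpha2 * (alpha1 + delta1) - delta4 * (alpha2 - 1))^2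
        - 4 * delta2 * delta4 * (1 - alpha2 * (alpha1 + delta1)) \<ge> 0 \<longrightarrow>
      (let a = alpha1 + delta1;
           A = 1 - alpha2 * a;
           u = (- A - delta4 * (alpha2 - 1) + sqrt ((A - delta4 * (alpha2 - 1))^2 - 4 * delta2 * delta4 * A))
               / (2 * delta4 * A);
           P = vec4 (1 - a * u) u u (1 / (1 + delta4 * u));
           q = 1 + delta4 * u;
           b = 1 - a * u;
           c3 = b + beta3 + beta2 * u + beta4 * q;
           c2 = beta3 * (beta2 * u + beta4 * q) + b * (beta3 + beta4 * q + beta2 * u * (1 - alpha2 * alpha1))
                + beta2 * beta4 * u / q * (q^2 - delta2 * delta4);
           c1 = b * (beta2 * beta4 * u / q * (q^2 * (1 - alpha2 * alpha1) - delta2 * delta4) + beta3 * beta4 * q)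
                + beta2 * beta3 * u * b * A + beta2 * beta3 * beta4 * u / q * (q^2 - delta2 * delta4);
           c0 = beta2 * beta3 * beta4 * u / q * b * (q^2 * A - delta2 * delta4)
       in F P = 0 \<and>
          (lin_stable F P \<longleftrightarrow>
             (0 < a * u \<and> a * u < 1 \<and>
              0 < delta2 \<and> delta2 < (A - delta4 * (alpha2 - 1))^2 / (4 * delta4 * A) \<and>
              c1 * c2 * c3 > c3^2 * c0 + c1^2))))"
proof -
  show ?thesis
    unfolding F_def Let_def
    apply (rule conjI)
     apply (rule SS1)
    apply (rule conjI)
     apply (rule SS2[OF pos(3) pos(4) pos(5)])
    apply (rule conjI)
     apply (rule impI)
     apply (rule SS3m[OF pos _ refl], assumption)
    apply (rule conjI)
     apply (rule impI)
     apply (rule SS3p[OF pos _ refl refl refl], assumption)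
    apply (rule conjI)
     apply (rule impI)+
     apply (rule SS4m[OF pos _ _ refl refl refl], assumption+)
    apply (rule impI)+
    apply (rule SS4p[OF pos _ _ refl refl refl refl refl refl refl refl refl], assumption+)
    done
qed

end
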